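(* Let $\varphi_\rho(z)=z\log z$ for $z>0$. In the discrete setting described in the context, let $(\rho_K^{n})_{K\in\mathcal M,\,0\le n\le N}$ be positive, let $(\rho_\sigma^{n+1})_{\sigma\in\mathcal{E}_{\rm int},0\le n\le N-1}$ be face values, and let $u_{K,\sigma}^{n}$ be normal face velocities. For $\sigma=K|L\in\mathcal{E}_{\rm int}$ and $0\le n\le N-1$, let $\rho_{KL}^{n+1}$ be the number $x_{KL}$ associated with $\varphi=\varphi_\rho$, $x_K=\rho_K^{n+1}$, $x_L=\rho_L^{n+1}$, and define \[ (\delta\varphi_\rho)_\sigma^{n+1}=\varphi_\rho(\rho_K^{n+1})-\varphi_\rho(\rho_\sigma^{n+1})+\varphi_\rho'(\rho_K^{n+1})\bigl[\rho_{KL}^{n+1}-\rho_K^{n+1}\bigr]+\tfrac12\bigl[\varphi_\rho'(\rho_K^{n+1})+\varphi_\rho'(\rho_L^{n+1})\bigr]\bigl[\rho_\sigma^{n+1}-\rho_{KL}^{n+1}\bigr] \] (this quantity does not depend on the ordering of $K$ and $L$), and for $K\in\mathcal{M}$, \[ |K|\,(\delta R_m)_K^{n+1}=\sum_{\sigma\in\mathcal{E}(K)\cap\mathcal{E}_{\rm int}}|\sigma|\,(\delta\varphi_\rho)_\sigma^{n+1}u_{K,\sigma}^{n+1}. \] Assume that for every $\sigma=K|L\in\mathcal{E}_{\rm int}$ and $0\le n\le N-1$: $\rho_\sigma^{n+1}\in|\hspace{-0.12em}[\rho_K^{n+1},\rho_{KL}^{n+1}]\hspace{-0.12em}|$ if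 $u_{K,\sigma}^{n+1}\ge0$, and $\rho_\sigma^{n+1}\in|\hspace{-0.12em}[\rho_L^{n+1},\rho_{KL}^{n+1}]\hspace{-0.12em}|$ otherwise. Let $M>1$ and suppose $\rho_K^n\le M$, $1/\rho_K^n\le M$ and $|u_{K,\sigma}^n|\le M$ for all $K\in\mathcal M$, $\sigma\in\mathcal{E}(K)$, $0\le n\le N$. Let $|\varphi_\rho'|_\infty$ be the maximum of $|\varphi_\rho'|$ on $[1/M,M]$. Then \[ \|\delta R_m\|_{-1,1}\le 3\,M\,|\varphi_\rho'|_\infty\,\|\rho\|_{x,BV}\,h_{\mathcal M}. \]
   Context: Setting: $\Omega\subset\mathbb{R}^d$ bounded; $\mathcal{M}$ a regular polytopal mesh of $\Omega$ with faces $\mathcal{E}$, faces of $K$ denoted $\mathcal{E}(K)$, interior faces $\mathcal{E}_{\rm int}$; $\sigma=K|L$ denotes the interior face between $K$ and $L$; $|K|$, $|\sigma|$ are the measures; ${\boldsymbol x}_K$ is the mass center of $K$; $h_{\mathcal M}=\max_{K}{\rm diam}(K)$. Uniform time grid $t_n=n\,\delta t$, $0\le n\le N$, $t_N=T$. Normal velocities satisfy $u_{L,\sigma}^n=-u_{K,\sigma}^n$ for $\sigma=K|L$ and vanish on boundary faces. Notation $|\hspace{-0.12em}[a,b]\hspace{-0.12em}|=[\min(a,b),\max(a,b)]$. The number $x_{KL}$: for a strictly convex continuously differentiable $\varphi$ on an interval $I$ and $x_K,x_L\in I$, $x_{KL}$ is the unique real number in $|\hspace{-0.12em}[x_K,x_L]\hspace{-0.12em}|$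 with $\varphi(x_K)+\varphi'(x_K)(x_{KL}-x_K)=\varphi(x_L)+\varphi'(x_L)(x_{KL}-x_L)$ if $x_K\ne x_L$, and $x_{KL}=x_K=x_L$ otherwise. Norms: for a family $(z_K^n)$, $\|z\|_{x,BV}=\sum_{n}\delta t\sum_{\sigma=K|L\in\mathcal{E}_{\rm int}}|\sigma|\,|z_L^n-z_K^n|$ (sum over all available time indices), and \[ \|z\|_{-1,1}=\sup_{\psi}\frac{1}{\sup_{{\boldsymbol x}\in\Omega,t\in(0,T)}|\nabla\psi({\boldsymbol x},t)|}\Bigl[\sum_{n}\delta t\sum_{K\in\mathcal M}|K|\,z_K^n\,\psi({\boldsymbol x}_K,t_n)\Bigr], \] the supremum being over $\psi\in C^\infty_c([0,T)\times\bar\Omega)$ (with nonzero gradient), and the sum over $n$ over the time indices on which $z$ is defined (here $n=1,\dots,N$). *)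

theory Defs
  imports "HOL-Analysis.Analysis"
begin

fun pderivs :: "'a::euclidean_space list \<Rightarrow> ('a \<Rightarrow> real) \<Rightarrow> 'a \<Rightarrow> real" where
  "pderivs [] f = f"
| "pderivs (b # bs) f = (\<lambda>x. deriv (\<lambda>t. pderivs bs f (x + t *\<^sub>R b)) 0)"

definition smooth_fun :: "('a::euclidean_space \<Rightarrow> real) \<Rightarrow> bool" where
  "smooth_fun f \<longleftrightarrow> (\<forall>bs. set bs \<subseteq> Basis \<longrightarrow>
      continuous_on UNIV (pderivs bs f) \<and>
      (\<forall>b\<in>Basis. \<forall>x. (\<lambda>t. pderivs bs f (x + t *\<^sub>R b)) differentiable (at 0)))"

text \<open>Test functions in C_c^infinity([0,T) x closure Omega) (space variable first):
  smooth functions whose support in [0,T) x closure Omega is compact, i.e. they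
  vanish for t in [t0,T] for some t0 < T.\<close>
definition test_fun :: "'a::euclidean_space set \<Rightarrow> real \<Rightarrow> ('a \<times> real \<Rightarrow> real) \<Rightarrow> bool" where
  "test_fun \<Omega> T \<psi> \<longleftrightarrow> smooth_fun \<psi> \<and>
     (\<exists>t0<T. \<forall>x\<in>closure \<Omega>. \<forall>t\<in>{t0..T}. \<psi> (x, t) = 0)"

definition grad_x :: "('a::euclidean_space \<times> real \<Rightarrow> real) \<Rightarrow> 'a \<Rightarrow> real \<Rightarrow> 'a" where
  "grad_x \<psi> x t = (SOME D. ((\<lambda>y. \<psi> (y, t)) has_derivative (\<lambda>h. D \<bullet> h)) (at x))"

definition grad_sup :: "'a::euclidean_space set \<Rightarrow> real \<Rightarrow> ('a \<times> real \<Rightarrow> real) \<Rightarrow> real" where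
  "grad_sup \<Omega> T \<psi> = Sup {norm (grad_x \<psi> x t) | x t. x \<in> \<Omega> \<and> t \<in> {0<..<T}}"

text \<open>A polytopal mesh of Omega: cells Msh (convex polytopes with nonempty interior,
  disjoint interiors, covering closure Omega); Fc K is the set of faces of K
  (planar convex polytopes of dimension d-1 covering the boundary of K, with disjoint
  relative interiors), each face belonging to at most two cells; fmeas is the
  (d-1)-dimensional measure of the faces.\<close>
definition polytopal_mesh ::
  "'a::euclidean_space set \<Rightarrow> 'a set set \<Rightarrow> ('a set \<Rightarrow> 'a set set) \<Rightarrow> ('a set \<Rightarrow> real) \<Rightarrow> bool" where
  "polytopal_mesh \<Omega> Msh Fc fmeas \<longleftrightarrow>
     bounded \<Omega> \<and> open \<Omega> \<and> finite Msh \<and> Msh \<noteq> {} \<and>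
     (\<forall>K\<in>Msh. polytope K \<and> interior K \<noteq> {}) \<and>
     (\<forall>K\<in>Msh. \<forall>L\<in>Msh. K \<noteq> L \<longrightarrow> interior K \<inter> interior L = {}) \<and>
     \<Union>Msh = closure \<Omega> \<and>
     (\<forall>K\<in>Msh. finite (Fc K) \<and> \<Union>(Fc K) = frontier K \<and>
        (\<forall>\<sigma>\<in>Fc K. polytope \<sigma> \<and> aff_dim \<sigma> = int DIM('a) - 1 \<and> fmeas \<sigma> > 0) \<and>
        (\<forall>\<sigma>\<in>Fc K. \<forall>\<tau>\<in>Fc K. \<sigma> \<noteq> \<tau> \<longrightarrow> rel_interior \<sigma> \<inter> rel_interior \<tau> = {})) \<and>
     (\<forall>\<sigma>. card {K\<in>Msh. \<sigma> \<in> Fc K} \<le> 2)"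

definition int_faces :: "'a set set \<Rightarrow> ('a set \<Rightarrow> 'a set set) \<Rightarrow> 'a set set" where
  "int_faces Msh Fc = {\<sigma>. \<exists>K\<in>Msh. \<exists>L\<in>Msh. K \<noteq> L \<and> \<sigma> \<in> Fc K \<and> \<sigma> \<in> Fc L}"

definition other_cell :: "'a set set \<Rightarrow> ('a set \<Rightarrow> 'a set set) \<Rightarrow> 'a set \<Rightarrow> 'a set \<Rightarrow> 'a set" where
  "other_cell Msh Fc K \<sigma> = (THE L. L \<in> Msh \<and> L \<noteq> K \<and> \<sigma> \<in> Fc L)"

text \<open>A chosen cell adjacent to sigma; with other_cell this gives sigma = K|L.\<close>
definition cellA :: "'a set set \<Rightarrow> ('a set \<Rightarrow> 'a set set) \<Rightarrow> 'a set \<Rightarrow> 'a set" where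
  "cellA Msh Fc \<sigma> = (SOME K. K \<in> Msh \<and> \<sigma> \<in> Fc K)"

definition mass_center :: "'a::euclidean_space set \<Rightarrow> 'a" where
  "mass_center K = integral K (\<lambda>x. x) /\<^sub>R measure lebesgue K"

definition mesh_size :: "'a::euclidean_space set set \<Rightarrow> real" where
  "mesh_size Msh = Max (diameter ` Msh)"

text \<open>Time step dt = T/N, t_n = n dt. I is the set of time indices on which z is defined.\<close>
definition norm_BV :: "'a set set \<Rightarrow> ('a set \<Rightarrow> 'a set set) \<Rightarrow> ('a set \<Rightarrow> real) \<Rightarrow>
     real \<Rightarrow> nat \<Rightarrow> nat set \<Rightarrow> ('a set \<Rightarrow> nat \<Rightarrow> real) \<Rightarrow> real" where
  "norm_BV Msh Fc fmeas T N I z =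
     (\<Sum>n\<in>I. (T / real N) * (\<Sum>\<sigma>\<in>int_faces Msh Fc.
        fmeas \<sigma> * \<bar>z (other_cell Msh Fc (cellA Msh Fc \<sigma>) \<sigma>) n - z (cellA Msh Fc \<sigma>) n\<bar>))"

definition norm_m11 :: "'a::euclidean_space set \<Rightarrow> 'a set set \<Rightarrow> real \<Rightarrow> nat \<Rightarrow> nat set \<Rightarrow>
     ('a set \<Rightarrow> nat \<Rightarrow> real) \<Rightarrow> ereal" where
  "norm_m11 \<Omega> Msh T N I z =
     (SUP \<psi>\<in>{\<psi>. test_fun \<Omega> T \<psi> \<and> grad_sup \<Omega> T \<psi> \<noteq> 0}.
        ereal ((\<Sum>n\<in>I. (T / real N) * (\<Sum>K\<in>Msh.
            measure lebesgue K * z K n * \<psi> (mass_center K, real n * (T / real N))))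
          / grad_sup \<Omega> T \<psi>))"

definition phi_rho :: "real \<Rightarrow> real" where
  "phi_rho z = z * ln z"

definition bracket_int :: "real \<Rightarrow> real \<Rightarrow> real set" where
  "bracket_int a b = {min a b .. max a b}"

definition xKL :: "(real \<Rightarrow> real) \<Rightarrow> real \<Rightarrow> real \<Rightarrow> real" where
  "xKL \<phi> a b = (if a = b then a else
     (THE x. x \<in> bracket_int a b \<and> \<phi> a + deriv \<phi> a * (x - a) = \<phi> b + deriv \<phi> b * (x - b)))"

text \<open>(delta phi)_sigma for sigma = K|L, with rK, rL the cell values and rs the face value.\<close>
definition dphi :: "(real \<Rightarrow> real) \<Rightarrow> real \<Rightarrow> real \<Rightarrow> real \<Rightarrow> real" where
  "dphi \<phi> rK rL rs = \<phi> rK - \<phi> rs + deriv \<phi> rK * (xKL \<phi> rK rL - rK)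
      + (deriv \<phi> rK + deriv \<phi> rL) / 2 * (rs - xKL \<phi> rK rL)"

definition dRm :: "'a::euclidean_space set set \<Rightarrow> ('a set \<Rightarrow> 'a set set) \<Rightarrow> ('a set \<Rightarrow> real) \<Rightarrow>
   ('a set \<Rightarrow> nat \<Rightarrow> real) \<Rightarrow> ('a set \<Rightarrow> nat \<Rightarrow> real) \<Rightarrow> ('a set \<Rightarrow> 'a set \<Rightarrow> nat \<Rightarrow> real) \<Rightarrow>
   'a set \<Rightarrow> nat \<Rightarrow> real" where
  "dRm Msh Fc fmeas \<rho> \<rho>s u K n =
     (\<Sum>\<sigma>\<in>Fc K \<inter> int_faces Msh Fc.
        fmeas \<sigma> * dphi phi_rho (\<rho> K n) (\<rho> (other_cell Msh Fc K \<sigma>) n) (\<rho>s \<sigma> n) * u K \<sigma> n)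
     / measure lebesgue K"

end

theory Submission
  imports Defs
begin

lemma deriv_phi: "z > 0 \<Longrightarrow> deriv phi_rho z = ln z + 1"
proof -
  assume z: "z > 0"
  have "((\<lambda>z. z * ln z) has_real_derivative (ln z + 1)) (at z)"
    by (rule DERIV_cong[OF DERIV_mult[OF DERIV_ident DERIV_ln[OF z]]]) (use z in simp)
  then have "(phi_rho has_real_derivative (ln z + 1)) (at z)"
    unfolding phi_rho_def[abs_def] .
  then show ?thesis using z by (intro DERIV_imp_deriv) simp
qed

lemma ln_lt_minus_one: "(x::real) > 0 \<Longrightarrow> x \<noteq> 1 \<Longrightarrow> ln x < x - 1"
proof -
  assume x: "x > 0" "x \<noteq> 1"
  have s: "sqrt x > 0" "sqrt x \<noteq> 1" using x by auto
  have "ln x = 2 * ln (sqrt x)" using x by (simp add: ln_sqrt)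
  also have "\<dots> \<le> 2 * (sqrt x - 1)" using ln_le_minus_one[OF s(1)] by simp
  also have "\<dots> < x - 1"
  proof -
    have "(sqrt x - 1)^2 > 0" using s by simp
    then show ?thesis using x by (simp add: power2_eq_square algebra_simps)
  qed
  finally show ?thesis .
qed

lemma logmean_gt:
  fixes a b :: real assumes a: "b > 0" "b < a"
  shows "b < (a - b) / (ln a - ln b)" "(a - b) / (ln a - ln b) < a"
proof -
  have lg: "ln a - ln b > 0" using a by simp
  have r: "ln (a/b) = ln a - ln b" using a by (simp add: ln_div)
  have h1: "ln (a/b) < a/b - 1" using a by (intro ln_lt_minus_one) auto
  have h2: "ln (b/a) < b/a - 1" using a by (intro ln_lt_minus_one) auto
  have r2: "ln (b/a) = ln b - ln a" using a by (simp add: ln_div)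
  have "b * (ln a - ln b) < a - b" using h1 r a by (simp add: field_simps)
  then show "b < (a - b) / (ln a - ln b)" using lg by (simp add: field_simps)
  have "a - b < a * (ln a - ln b)" using h2 r2 a by (simp add: field_simps)
  then show "(a - b) / (ln a - ln b) < a" using lg by (simp add: field_simps)
qed

lemma xKL_eq:
  fixes a b :: real assumes "a > 0" "b > 0" "a \<noteq> b"
  shows "xKL phi_rho a b = (a - b) / (ln a - ln b)"
proof -
  let ?x = "(a - b) / (ln a - ln b)"
  have lg: "ln a - ln b \<noteq> 0" using assms by simp
  have eq: "\<And>x. phi_rho a + deriv phi_rho a * (x - a) = phi_rho b + deriv phi_rho b * (x - b)
     \<longleftrightarrow> x = ?x"
  proof -
    fix x
    have "phi_rho a + deriv phi_rho a * (x - a) = phi_rho b + deriv phi_rho b * (x - b)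
      \<longleftrightarrow> x * (ln a - ln b) = a - b"
      using assms by (simp add: deriv_phi phi_rho_def algebra_simps)
    also have "\<dots> \<longleftrightarrow> x = ?x" using lg by (simp add: field_simps)
    finally show "?thesis x" .
  qed
  have inb: "?x \<in> bracket_int a b"
  proof (cases "a < b")
    case True
    have "(a - b) / (ln a - ln b) = (b - a) / (ln b - ln a)"
      by (metis minus_diff_eq minus_divide_divide)
    then show ?thesis using logmean_gt[of a b] True assms
      by (auto simp: bracket_int_def)
  next
    case False
    then show ?thesis using logmean_gt[of b a] assms
      by (auto simp: bracket_int_def)
  qed
  show ?thesis unfolding xKL_def using assms
    by (auto intro!: the_equality simp: eq inb)
qed

lemma xKL_sym: "a > 0 \<Longrightarrow> b > 0 \<Longrightarrow> xKL phi_rho a b = xKL phi_rho b a"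
  by (cases "a = b") (auto simp: xKL_eq, metis minus_diff_eq minus_divide_divide)

lemma dphi_sym:
  assumes "a > 0" "b > 0"
  shows "dphi phi_rho a b s = dphi phi_rho b a s"
proof (cases "a = b")
  case True then show ?thesis by simp
next
  case False
  define x where "x = (a - b) / (ln a - ln b)"
  have lg: "ln a - ln b \<noteq> 0" using assms False by simp
  have "x * (ln a - ln b) = a - b" using lg unfolding x_def by simp
  then have xe: "x * ln a - x * ln b = a - b" by (simp add: algebra_simps)
  have xs: "xKL phi_rho a b = x" "xKL phi_rho b a = x"
    using xKL_sym[OF assms] xKL_eq[OF assms False] x_def by auto
  have "dphi phi_rho a b s - dphi phi_rho b a s = x * ln a - x * ln b - (a - b)"
    unfolding dphi_def xs using assms by (simp add: deriv_phi phi_rho_def algebra_simps)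
  then show ?thesis using xe by simp
qed

lemma xlnx_convex:
  fixes p q :: real assumes "p > 0" "q > 0"
  shows "q * ln q \<ge> p * ln p + (ln p + 1) * (q - p)"
proof -
  have "ln (p/q) \<le> p/q - 1" using assms by (intro ln_le_minus_one) auto
  then have "q * ln (p/q) \<le> p - q" using assms by (simp add: field_simps)
  then have "q * (ln p - ln q) \<le> p - q" using assms by (simp add: ln_div)
  then show ?thesis by (simp add: algebra_simps)
qed

lemma dphi_bound:
  fixes a b s M :: real
  assumes a: "a > 0" "b > 0" "a \<le> M" "b \<le> M" "1/a \<le> M" "1/b \<le> M" "M > 1"
    and s: "s \<in> bracket_int a (xKL phi_rho a b)"
  shows "\<bar>dphi phi_rho a b s\<bar> \<le> 3/2 * (1 + ln M) * \<bar>a - b\<bar>"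
proof (cases "a = b")
  case True
  then have xa: "xKL phi_rho a b = a" by (simp add: xKL_def)
  then have "s = a" using s True by (simp add: bracket_int_def)
  then show ?thesis using True xa by (simp add: dphi_def)
next
  case False
  define x where "x = (a - b) / (ln a - ln b)"
  define A where "A = ln a"
  define B where "B = ln b"
  define S where "S = ln s"
  define X where "X = ln x"
  define L where "L = ln M"
  have L0: "L > 0" using a unfolding L_def by simp
  have AL: "A \<le> L" "-L \<le> A" "B \<le> L" "-L \<le> B"
  proof -
    show "A \<le> L" "B \<le> L" using a unfolding A_def B_def L_def by auto
    have "1/M \<le> a" "1/M \<le> b" using a by (auto simp: field_simps)
    then have "ln (1/M) \<le> A" "ln (1/M) \<le> B" unfolding A_def B_def using a
      by (auto simp del: ln_div)
    then show "-L \<le> A" "-L \<le> B" unfolding L_def using a by (auto simp: ln_div)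
  qed
  have lg: "ln a - ln b \<noteq> 0" using a False by simp
  have xeq: "x * (A - B) = a - b" using lg unfolding x_def A_def B_def by simp
  have xs: "xKL phi_rho a b = x" using xKL_eq[OF a(1,2) False] x_def by simp
  have dp: "dphi phi_rho a b s = a * A - s * S + (A + 1) * (x - a) + ((A + B)/2 + 1) * (s - x)"
    unfolding dphi_def xs using a by (simp add: deriv_phi phi_rho_def A_def B_def S_def)
  show ?thesis
  proof (cases "a < b")
    case True
    have xb: "a < x" "x < b" using logmean_gt[of a b] True a unfolding x_def
      by (metis minus_diff_eq minus_divide_divide)+
    have sb: "a \<le> s" "s \<le> x" using s xb unfolding xs bracket_int_def by auto
    have s0: "s > 0" using sb a by simp
    have SB: "A \<le> S" "S \<le> B" using sb xb a s0 unfolding A_def B_def S_def by auto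
    have AB: "A < B" using True a unfolding A_def B_def by simp
    have C1: "a * A - s * S \<le> (A + 1) * (a - s)"
      using xlnx_convex[OF a(1) s0] unfolding A_def S_def by (simp add: algebra_simps)
    have C2: "a * A - s * S \<ge> (S + 1) * (a - s)"
      using xlnx_convex[OF s0 a(1)] unfolding A_def S_def by (simp add: algebra_simps)
    have up: "dphi phi_rho a b s \<le> 0"
    proof -
      have "dphi phi_rho a b s - (A - (A+B)/2) * (x - s) = (a * A - s * S) - (A + 1) * (a - s)"
        unfolding dp by (simp add: field_simps)
      then have "dphi phi_rho a b s \<le> (A - (A+B)/2) * (x - s)" using C1 by linarith
      also have "\<dots> \<le> 0" using AB sb by (intro mult_nonpos_nonneg) auto
      finally show ?thesis .
    qed
    have lo: "dphi phi_rho a b s \<ge> - (B - A) * (x - a)"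
    proof -
      have "dphi phi_rho a b s - (((A+B)/2 - S) * (s - a) - ((A+B)/2 - A) * (x - a)) = (a * A - s * S) - (S + 1) * (a - s)"
        unfolding dp by (simp add: field_simps)
      then have e1: "dphi phi_rho a b s \<ge> ((A+B)/2 - S) * (s - a) - ((A+B)/2 - A) * (x - a)"
        using C2 by linarith
      have "((A+B)/2 - S) * (s - a) \<ge> ((A+B)/2 - B) * (s - a)"
        by (rule mult_right_mono) (use SB sb in linarith)+
      moreover have "((A+B)/2 - B) * (s - a) \<ge> ((A+B)/2 - B) * (x - a)"
        by (rule mult_left_mono_neg) (use AB sb in \<open>auto simp: field_simps\<close>)+
      moreover have "((A+B)/2 - B)*(x-a) - ((A+B)/2 - A)*(x-a) = -(B-A)*(x-a)" by (simp add: field_simps)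
      ultimately show ?thesis using e1 by linarith
    qed
    have "(B - A) * (x - a) = (b - a) - a * (B - A)" using xeq by (simp add: algebra_simps)
    also have "\<dots> \<le> b - a" using AB a by simp
    finally have "(B - A) * (x - a) \<le> b - a" .
    moreover have "(A - B) * (x - a) = - ((B - A) * (x - a))" by (simp add: algebra_simps)
    ultimately have "\<bar>dphi phi_rho a b s\<bar> \<le> b - a" using up lo by linarith
    also have "\<dots> = 1 * \<bar>a - b\<bar>" using True by simp
    also have "\<dots> \<le> 3/2 * (1 + ln M) * \<bar>a - b\<bar>" using L0 unfolding L_def
      by (intro mult_right_mono) auto
    finally show ?thesis .
  next
    case False
    then have ba: "b < a" using \<open>a \<noteq> b\<close> by simp
    have xb: "b < x" "x < a" using logmean_gt[of b a] ba a unfolding x_def by auto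
    have sb: "x \<le> s" "s \<le> a" using s xb unfolding xs bracket_int_def by auto
    have s0: "s > 0" using sb xb a by simp
    have x0: "x > 0" using xb a by simp
    have SB: "X \<le> S" "S \<le> A" using sb xb a s0 x0 unfolding A_def X_def S_def by auto
    have AB: "B < A" using ba a unfolding A_def B_def by simp
    have C1: "a * A - s * S \<le> (A + 1) * (a - s)"
      using xlnx_convex[OF a(1) s0] unfolding A_def S_def by (simp add: algebra_simps)
    have C2: "a * A - s * S \<ge> (S + 1) * (a - s)"
      using xlnx_convex[OF s0 a(1)] unfolding A_def S_def by (simp add: algebra_simps)
    have up: "dphi phi_rho a b s \<le> 0"
    proof -
      have "dphi phi_rho a b s - (A - (A+B)/2) * (x - s) = (a * A - s * S) - (A + 1) * (a - s)"
        unfolding dp by (simp add: field_simps)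
      then have "dphi phi_rho a b s \<le> (A - (A+B)/2) * (x - s)" using C1 by linarith
      also have "\<dots> \<le> 0" using AB sb by (intro mult_nonneg_nonpos) auto
      finally show ?thesis .
    qed
    define m where "m = max (A - (A+B)/2) (A - X)"
    have lo: "dphi phi_rho a b s \<ge> - m * (a - x)"
    proof -
      have "dphi phi_rho a b s - (- ((A+B)/2 - S) * (a - s) - (A - (A+B)/2) * (a - x)) = (a * A - s * S) - (S + 1) * (a - s)"
        unfolding dp by (simp add: field_simps)
      then have e1: "dphi phi_rho a b s \<ge> - ((A+B)/2 - S) * (a - s) - (A - (A+B)/2) * (a - x)"
        using C2 by linarith
      have e2: "((A+B)/2 - S) * (a - s) \<le> max 0 ((A+B)/2 - X) * (a - x)"
      proof (cases "(A+B)/2 - S \<le> 0")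
        case True
        then have "((A+B)/2 - S) * (a - s) \<le> 0" using sb by (intro mult_nonpos_nonneg) auto
        also have "0 \<le> max 0 ((A+B)/2 - X) * (a - x)" using xb by simp
        finally show ?thesis .
      next
        case False
        have "((A+B)/2 - S) * (a - s) \<le> ((A+B)/2 - X) * (a - s)"
          by (rule mult_right_mono) (use SB sb in linarith)+
        also have "\<dots> \<le> ((A+B)/2 - X) * (a - x)" by (rule mult_left_mono) (use False SB sb in linarith)+
        also have "\<dots> \<le> max 0 ((A+B)/2 - X) * (a - x)" using xb by (intro mult_right_mono) auto
        finally show ?thesis .
      qed
      have "max 0 ((A+B)/2 - X) + (A - (A+B)/2) = m" unfolding m_def by (auto simp: max_def)
      then have "max 0 ((A+B)/2 - X) * (a - x) + (A - (A+B)/2) * (a - x) = m * (a - x)"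
        by (metis distrib_right)
      then show ?thesis using e1 e2 by linarith
    qed
    have m1: "A - X \<le> 1/2 + L"
    proof -
      have r: "ln (a/b) \<le> a/b - 1" using a by (intro ln_le_minus_one) auto
      have "ln (a/b) = A - B" using a unfolding A_def B_def by (simp add: ln_div)
      with r have "b * (A - B) \<le> a - b" using a by (simp add: field_simps)
      then have "a * (A - B) \<le> (a - b) * (1 + (A - B))" by (simp add: algebra_simps)
      then have "a * (A - B) / (a - b) \<le> 1 + (A - B)" using ba by (simp add: field_simps)
      moreover have "a / x = a * (A - B) / (a - b)" unfolding x_def A_def B_def by simp
      ultimately have ax: "a / x \<le> 1 + 2 * L" using AL by simp
      have "A - X = ln (a / x)" using a x0 unfolding A_def X_def by (simp add: ln_div)
      also have "\<dots> \<le> ln (1 + 2 * L)" by (subst ln_le_cancel_iff) (use ax a x0 L0 in auto)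
      also have "\<dots> = ln 2 + ln ((1 + 2 * L)/2)" using L0 by (simp add: ln_div)
      also have "\<dots> \<le> (2 - 1) + ((1 + 2 * L)/2 - 1)"
        using ln_le_minus_one[of 2] ln_le_minus_one[of "(1 + 2 * L)/2"] L0 by (simp add: field_simps)
      finally show ?thesis by (simp add: field_simps)
    qed
    have m2: "A - (A+B)/2 \<le> L" using AL by (simp add: field_simps)
    have mb: "0 \<le> m" "m \<le> 3/2 * (1 + L)" using m1 m2 L0 AB unfolding m_def by (auto simp: max_def field_simps)
    have "\<bar>dphi phi_rho a b s\<bar> \<le> m * (a - x)" using up lo by simp
    also have "\<dots> \<le> 3/2 * (1 + L) * (a - b)" using mb xb by (intro mult_mono) auto
    finally show ?thesis using ba unfolding L_def by simp
  qed
qed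

lemma partials_step:
  fixes f :: "'a::euclidean_space \<Rightarrow> real" and P :: "'a \<Rightarrow> 'a \<Rightarrow> real"
  assumes d: "\<And>b y. b \<in> Basis \<Longrightarrow> ((\<lambda>t. f (y + t *\<^sub>R b)) has_real_derivative P b y) (at 0)"
    and c: "\<And>b. b \<in> Basis \<Longrightarrow> continuous_on UNIV (P b)"
    and S: "finite S" "S \<subseteq> Basis"
  shows "\<forall>e>0. \<exists>d>0. \<forall>h. norm h < d \<longrightarrow>
     \<bar>f (x + (\<Sum>b\<in>S. (h \<bullet> b) *\<^sub>R b)) - f x - (\<Sum>b\<in>S. (h \<bullet> b) * P b x)\<bar> \<le> e * norm h"
  using S
proof (induction S rule: finite_induct)
  case empty
  then show ?case by (auto intro: exI[of _ 1])
next
  case (insert c' S)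
  have cB: "c' \<in> Basis" and SB: "S \<subseteq> Basis" using insert by auto
  show ?case
  proof (intro allI impI)
    fix e :: real assume e: "e > 0"
    obtain d1 where d1: "d1 > 0" "\<And>h. norm h < d1 \<Longrightarrow>
       \<bar>f (x + (\<Sum>b\<in>S. (h \<bullet> b) *\<^sub>R b)) - f x - (\<Sum>b\<in>S. (h \<bullet> b) * P b x)\<bar> \<le> e/2 * norm h"
      using insert.IH[OF SB] e by (meson half_gt_zero)
    have "isCont (P c') x" using c[OF cB] by (simp add: continuous_on_eq_continuous_at)
    then obtain dc where dc: "dc > 0" "\<And>z. dist z x < dc \<Longrightarrow> dist (P c' z) (P c' x) < e/2"
      using e unfolding continuous_at_eps_delta by (meson half_gt_zero)
    define k where "k = real (card S) + 1"
    have k: "k \<ge> 1" unfolding k_def by simp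
    define d where "d = min d1 (dc / k)"
    have d0: "d > 0" unfolding d_def using d1 dc k by simp
    show "\<exists>d>0. \<forall>h. norm h < d \<longrightarrow>
       \<bar>f (x + (\<Sum>b\<in>insert c' S. (h \<bullet> b) *\<^sub>R b)) - f x - (\<Sum>b\<in>insert c' S. (h \<bullet> b) * P b x)\<bar>
          \<le> e * norm h"
    proof (intro exI[of _ d] conjI allI impI d0)
      fix h :: 'a assume h: "norm h < d"
      define y where "y = x + (\<Sum>b\<in>S. (h \<bullet> b) *\<^sub>R b)"
      define \<tau> where "\<tau> = h \<bullet> c'"
      have tau: "\<bar>\<tau>\<bar> \<le> norm h" unfolding \<tau>_def using cB by (simp add: Basis_le_norm)
      have ny: "norm (y - x) \<le> real (card S) * norm h"
      proof -
        have "norm (y - x) \<le> (\<Sum>b\<in>S. norm ((h \<bullet> b) *\<^sub>R b))" unfolding y_def using norm_sum[of "\<lambda>b. (h \<bullet> b) *\<^sub>R b" S] by simp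
        also have "\<dots> \<le> (\<Sum>b\<in>S. norm h)"
          using SB by (intro sum_mono) (auto simp: Basis_le_norm)
        finally show ?thesis by simp
      qed
      have small: "norm (y - x) + \<bar>\<tau>\<bar> < dc"
      proof -
        have "norm (y - x) + \<bar>\<tau>\<bar> \<le> k * norm h" using ny tau unfolding k_def by (simp add: algebra_simps)
        also have "\<dots> < k * (dc / k)" using h k unfolding d_def by (intro mult_strict_left_mono) auto
        finally show ?thesis using k by simp
      qed
      define g where "g = (\<lambda>t. f (y + t *\<^sub>R c') - t * P c' x)"
      have gd: "(g has_real_derivative (P c' (y + t *\<^sub>R c') - P c' x)) (at t within closed_segment 0 \<tau>)" for t
      proof -
        have "((\<lambda>s. f ((y + t *\<^sub>R c') + s *\<^sub>R c')) has_real_derivative P c' (y + t *\<^sub>R c')) (at 0)"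
          using d[OF cB] .
        then have "((\<lambda>s. f (y + (s + t) *\<^sub>R c')) has_real_derivative P c' (y + t *\<^sub>R c')) (at 0)"
          by (simp add: algebra_simps scaleR_add_left)
        then have "((\<lambda>s. f (y + s *\<^sub>R c')) has_real_derivative P c' (y + t *\<^sub>R c')) (at (0 + t))"
          by (subst DERIV_shift) simp
        then have "((\<lambda>s. f (y + s *\<^sub>R c')) has_real_derivative P c' (y + t *\<^sub>R c')) (at t)" by simp
        moreover have "((\<lambda>z. z * P c' x) has_real_derivative 1 * P c' x) (at t)"
          by (rule DERIV_cmult_right[OF DERIV_ident])
        ultimately have "(g has_real_derivative (P c' (y + t *\<^sub>R c') - 1 * P c' x)) (at t)"
          unfolding g_def by (rule DERIV_diff)
        then show ?thesis by (simp add: has_field_derivative_at_within)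
      qed
      have gb: "norm (P c' (y + t *\<^sub>R c') - P c' x) \<le> e/2" if t: "t \<in> closed_segment 0 \<tau>" for t
      proof -
        have "\<bar>t\<bar> \<le> \<bar>\<tau>\<bar>" using t by (auto simp: closed_segment_eq_real_ivl split: if_splits)
        then have "norm (t *\<^sub>R c') \<le> \<bar>\<tau>\<bar>" using cB by simp
        moreover have "dist (y + t *\<^sub>R c') x \<le> norm (y - x) + norm (t *\<^sub>R c')"
        proof -
          have eq: "y + t *\<^sub>R c' - x = (y - x) + t *\<^sub>R c'" by (simp add: algebra_simps)
          show ?thesis unfolding dist_norm eq by (rule norm_triangle_ineq)
        qed
        ultimately have "dist (y + t *\<^sub>R c') x \<le> norm (y - x) + \<bar>\<tau>\<bar>" by linarith
        then have "dist (y + t *\<^sub>R c') x < dc" using small by simp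
        then have "dist (P c' (y + t *\<^sub>R c')) (P c' x) < e/2" by (rule dc(2))
        then show ?thesis by (simp add: dist_real_def)
      qed
      have "norm (g \<tau> - g 0) \<le> e/2 * norm (\<tau> - 0)"
        by (rule field_differentiable_bound[OF convex_closed_segment gd gb]) auto
      moreover have "g \<tau> - g 0 = f (y + \<tau> *\<^sub>R c') - f y - \<tau> * P c' x" unfolding g_def by simp
      ultimately have A0: "\<bar>f (y + \<tau> *\<^sub>R c') - f y - \<tau> * P c' x\<bar> \<le> e/2 * \<bar>\<tau>\<bar>" by simp
      have "e/2 * \<bar>\<tau>\<bar> \<le> e/2 * norm h" using tau e by (intro mult_left_mono) auto
      with A0 have A1: "\<bar>f (y + \<tau> *\<^sub>R c') - f y - \<tau> * P c' x\<bar> \<le> e/2 * norm h" by linarith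
      have A2: "\<bar>f y - f x - (\<Sum>b\<in>S. (h \<bullet> b) * P b x)\<bar> \<le> e/2 * norm h"
        using d1(2)[of h] h unfolding d_def y_def by simp
      have eqs: "x + (\<Sum>b\<in>insert c' S. (h \<bullet> b) *\<^sub>R b) = y + \<tau> *\<^sub>R c'"
        "(\<Sum>b\<in>insert c' S. (h \<bullet> b) * P b x) = \<tau> * P c' x + (\<Sum>b\<in>S. (h \<bullet> b) * P b x)"
        using insert.hyps unfolding y_def \<tau>_def by (simp_all add: algebra_simps)
      show "\<bar>f (x + (\<Sum>b\<in>insert c' S. (h \<bullet> b) *\<^sub>R b)) - f x - (\<Sum>b\<in>insert c' S. (h \<bullet> b) * P b x)\<bar>
          \<le> e * norm h"
        unfolding eqs using A1 A2 by linarith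
    qed
  qed
qed

lemma partials_has_derivative:
  fixes f :: "'a::euclidean_space \<Rightarrow> real" and P :: "'a \<Rightarrow> 'a \<Rightarrow> real"
  assumes d: "\<And>b y. b \<in> Basis \<Longrightarrow> ((\<lambda>t. f (y + t *\<^sub>R b)) has_real_derivative P b y) (at 0)"
    and c: "\<And>b. b \<in> Basis \<Longrightarrow> continuous_on UNIV (P b)"
  shows "(f has_derivative (\<lambda>h. \<Sum>b\<in>Basis. (h \<bullet> b) * P b x)) (at x)"
  unfolding has_derivative_at_alt
proof (intro conjI allI impI)
  show "bounded_linear (\<lambda>h. \<Sum>b\<in>Basis. (h \<bullet> b) * P b x)"
    by (intro bounded_linear_sum) (auto intro!: bounded_linear_mult_const bounded_linear_inner_left)
  fix e :: real assume e: "e > 0"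
  from partials_step[OF d c finite_Basis order_refl, of x] e obtain dd where dd: "dd > 0"
    "\<And>h. norm h < dd \<Longrightarrow> \<bar>f (x + (\<Sum>b\<in>Basis. (h \<bullet> b) *\<^sub>R b)) - f x - (\<Sum>b\<in>Basis. (h \<bullet> b) * P b x)\<bar> \<le> e * norm h"
    by blast
  show "\<exists>d>0. \<forall>y. norm (y - x) < d \<longrightarrow>
      norm (f y - f x - (\<Sum>b\<in>Basis. ((y - x) \<bullet> b) * P b x)) \<le> e * norm (y - x)"
  proof (intro exI[of _ dd] conjI allI impI dd(1))
    fix y assume "norm (y - x) < dd"
    then show "norm (f y - f x - (\<Sum>b\<in>Basis. ((y - x) \<bullet> b) * P b x)) \<le> e * norm (y - x)"
      using dd(2)[of "y - x"] by (simp add: euclidean_representation)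
  qed
qed


lemma sum_Basis_prod_eq':
  fixes f::"('a::euclidean_space * 'b::euclidean_space) \<Rightarrow> real"
  shows "sum f Basis = sum (\<lambda>i. f (i, 0)) Basis + sum (\<lambda>i. f (0, i)) Basis"
proof -
  have "inj_on (\<lambda>u. (u::'a, 0::'b)) Basis" "inj_on (\<lambda>u. (0::'a, u::'b)) Basis"
    by (auto intro!: inj_onI Pair_inject)
  thus ?thesis
    unfolding Basis_prod_def
    by (subst sum.union_disjoint) (auto simp: Basis_prod_def sum.reindex)
qed

definition gvec :: "('a::euclidean_space \<times> real \<Rightarrow> real) \<Rightarrow> 'a \<Rightarrow> real \<Rightarrow> 'a" where
  "gvec \<psi> x t = (\<Sum>b\<in>Basis. pderivs [(b, 0)] \<psi> (x, t) *\<^sub>R b)"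

lemma smooth_has_derivative:
  fixes \<psi> :: "'a::euclidean_space \<Rightarrow> real"
  assumes "smooth_fun \<psi>"
  shows "(\<psi> has_derivative (\<lambda>h. \<Sum>b\<in>Basis. (h \<bullet> b) * pderivs [b] \<psi> z)) (at z)"
proof (rule partials_has_derivative)
  fix b y assume b: "(b::'a) \<in> Basis"
  have "(\<lambda>t. \<psi> (y + t *\<^sub>R b)) differentiable (at 0)"
    using assms b unfolding smooth_fun_def by (metis empty_subsetI empty_set pderivs.simps(1))
  then show "((\<lambda>t. \<psi> (y + t *\<^sub>R b)) has_real_derivative pderivs [b] \<psi> y) (at 0)"
    by (simp add: DERIV_deriv_iff_real_differentiable)
next
  fix b assume b: "(b::'a) \<in> Basis"
  then show "continuous_on UNIV (pderivs [b] \<psi>)"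
    using assms unfolding smooth_fun_def by (metis empty_subsetI empty_set insert_subset list.simps(15))
qed

lemma gvec_deriv:
  fixes \<psi> :: "'a::euclidean_space \<times> real \<Rightarrow> real"
  assumes "smooth_fun \<psi>"
  shows "((\<lambda>y. \<psi> (y, t)) has_derivative (\<lambda>h. gvec \<psi> x t \<bullet> h)) (at x)"
proof -
  have "((\<lambda>y. (y, t)) has_derivative (\<lambda>h. (h, 0))) (at x)"
    by (auto intro!: derivative_eq_intros)
  from has_derivative_compose[OF this smooth_has_derivative[OF assms, of "(x, t)"]]
  have "((\<lambda>y. \<psi> (y, t)) has_derivative (\<lambda>h. \<Sum>b\<in>Basis. ((h, 0) \<bullet> b) * pderivs [b] \<psi> (x, t))) (at x)"
    by (simp add: o_def)
  moreover have "(\<lambda>h::'a. \<Sum>b\<in>Basis. ((h, 0::real) \<bullet> b) * pderivs [b] \<psi> (x, t)) = (\<lambda>h. gvec \<psi> x t \<bullet> h)"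
  proof (rule ext)
    fix h :: 'a
    have "(\<Sum>b\<in>Basis. ((h, 0::real) \<bullet> b) * pderivs [b] \<psi> (x, t)) =
      (\<Sum>i\<in>Basis. ((h, 0::real) \<bullet> (i, 0)) * pderivs [(i, 0)] \<psi> (x, t)) +
      (\<Sum>i\<in>Basis. ((h, 0::real) \<bullet> (0, i)) * pderivs [(0, i)] \<psi> (x, t))"
      using sum_Basis_prod_eq'[of "\<lambda>b. ((h, 0::real) \<bullet> b) * pderivs [b] \<psi> (x, t)"]
      by (simp del: pderivs.simps)
    also have "\<dots> = gvec \<psi> x t \<bullet> h"
      by (simp add: gvec_def inner_sum_right inner_commute mult.commute del: pderivs.simps)
    finally show "(\<Sum>b\<in>Basis. ((h, 0::real) \<bullet> b) * pderivs [b] \<psi> (x, t)) = gvec \<psi> x t \<bullet> h" .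
  qed
  ultimately show ?thesis by simp
qed

lemma grad_x_eq:
  fixes \<psi> :: "'a::euclidean_space \<times> real \<Rightarrow> real"
  assumes "smooth_fun \<psi>"
  shows "grad_x \<psi> x t = gvec \<psi> x t"
proof -
  have ex: "\<exists>D. ((\<lambda>y. \<psi> (y, t)) has_derivative (\<lambda>h. D \<bullet> h)) (at x)"
    using gvec_deriv[OF assms] by blast
  let ?D = "grad_x \<psi> x t"
  have "((\<lambda>y. \<psi> (y, t)) has_derivative (\<lambda>h. ?D \<bullet> h)) (at x)"
    unfolding grad_x_def by (rule someI_ex[OF ex])
  from has_derivative_unique[OF this gvec_deriv[OF assms]]
  have "\<And>h. ?D \<bullet> h = gvec \<psi> x t \<bullet> h" by meson
  then have "(?D - gvec \<psi> x t) \<bullet> (?D - gvec \<psi> x t) = 0" by (simp add: inner_diff_left)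
  then show ?thesis by simp
qed

lemma gvec_cont:
  fixes \<psi> :: "'a::euclidean_space \<times> real \<Rightarrow> real"
  assumes "smooth_fun \<psi>"
  shows "continuous_on UNIV (\<lambda>p. gvec \<psi> (fst p) (snd p))"
proof -
  have c: "continuous_on UNIV (pderivs [(b, 0)] \<psi>)" if "b \<in> Basis" for b :: 'a
  proof -
    have "(b, 0::real) \<in> Basis" using that by (simp add: Basis_prod_def)
    then show ?thesis using assms unfolding smooth_fun_def
      by (metis empty_subsetI empty_set insert_subset list.simps(15))
  qed
  have e: "(\<lambda>p. gvec \<psi> (fst p) (snd p)) = (\<lambda>p. \<Sum>b\<in>Basis. pderivs [(b, 0)] \<psi> p *\<^sub>R b)"
    by (simp add: gvec_def del: pderivs.simps)
  show ?thesis unfolding e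
    by (intro continuous_on_sum continuous_on_scaleR continuous_on_const c)
qed

lemma grad_sup_bound:
  fixes \<psi> :: "'a::euclidean_space \<times> real \<Rightarrow> real"
  assumes sm: "smooth_fun \<psi>" and bd: "bounded \<Omega>" and T: "T > 0"
  shows "\<And>x t. x \<in> closure \<Omega> \<Longrightarrow> t \<in> {0<..<T} \<Longrightarrow> norm (gvec \<psi> x t) \<le> grad_sup \<Omega> T \<psi>"
    and "\<Omega> \<noteq> {} \<Longrightarrow> grad_sup \<Omega> T \<psi> \<ge> 0"
proof -
  let ?S = "{norm (grad_x \<psi> x t) | x t. x \<in> \<Omega> \<and> t \<in> {0<..<T}}"
  let ?F = "\<lambda>p. norm (gvec \<psi> (fst p) (snd p))"
  have cF: "continuous_on UNIV ?F" using gvec_cont[OF sm] by (intro continuous_on_norm)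
  have "compact (?F ` (closure \<Omega> \<times> {0..T}))"
    using bd by (intro compact_continuous_image continuous_on_subset[OF cF] compact_Times) auto
  then have bF: "bdd_above (?F ` (closure \<Omega> \<times> {0..T}))"
    by (intro bounded_imp_bdd_above compact_imp_bounded)
  have sub: "?S \<subseteq> ?F ` (closure \<Omega> \<times> {0..T})"
  proof
    fix v assume "v \<in> ?S"
    then obtain x t where "v = norm (grad_x \<psi> x t)" "x \<in> \<Omega>" "t \<in> {0<..<T}" by blast
    then show "v \<in> ?F ` (closure \<Omega> \<times> {0..T})"
      using closure_subset[of \<Omega>] by (intro image_eqI[of _ _ "(x, t)"]) (auto simp: grad_x_eq[OF sm])
  qed
  have bS: "bdd_above ?S" using bdd_above_mono[OF bF sub] .
  have inO: "norm (gvec \<psi> x t) \<le> grad_sup \<Omega> T \<psi>" if "x \<in> \<Omega>" "t \<in> {0<..<T}" for x t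
    unfolding grad_sup_def using that grad_x_eq[OF sm]
    by (intro cSup_upper[OF _ bS]) auto
  show "norm (gvec \<psi> x t) \<le> grad_sup \<Omega> T \<psi>" if "x \<in> closure \<Omega>" "t \<in> {0<..<T}" for x t
  proof (rule continuous_le_on_closure[of \<Omega> "\<lambda>x. norm (gvec \<psi> x t)"])
    have "continuous_on UNIV (\<lambda>x. ?F (x, t))"
      by (rule continuous_on_compose2[OF cF]) (auto intro!: continuous_intros)
    then show "continuous_on (closure \<Omega>) (\<lambda>x. norm (gvec \<psi> x t))"
      by (auto intro: continuous_on_subset)
  qed (use that inO in auto)
  show "grad_sup \<Omega> T \<psi> \<ge> 0" if ne: "\<Omega> \<noteq> {}"
  proof -
    obtain x where "x \<in> \<Omega>" using ne by blast
    moreover have "T/2 \<in> {0<..<T}" using T by auto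
    ultimately have "norm (gvec \<psi> x (T/2)) \<le> grad_sup \<Omega> T \<psi>" using inO by blast
    then show ?thesis by (meson norm_ge_zero order_trans)
  qed
qed

lemma lipschitz_segment:
  fixes \<psi> :: "'a::euclidean_space \<times> real \<Rightarrow> real"
  assumes sm: "smooth_fun \<psi>" and seg: "closed_segment p q \<subseteq> C"
    and G: "\<And>y. y \<in> C \<Longrightarrow> norm (gvec \<psi> y t) \<le> G"
  shows "\<bar>\<psi> (p, t) - \<psi> (q, t)\<bar> \<le> G * norm (p - q)"
proof -
  have "norm ((\<lambda>y. \<psi> (y, t)) p - (\<lambda>y. \<psi> (y, t)) q) \<le> G * norm (p - q)"
  proof (rule differentiable_bound[OF convex_closed_segment])
    fix y assume "y \<in> closed_segment p q"
    show "((\<lambda>y. \<psi> (y, t)) has_derivative (\<lambda>h. gvec \<psi> y t \<bullet> h)) (at y within closed_segment p q)"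
      by (rule has_derivative_at_withinI[OF gvec_deriv[OF sm]])
    have bl: "bounded_linear (\<lambda>h::'a. h)" by (rule bounded_linear_ident)
    have "onorm (\<lambda>h. gvec \<psi> y t \<bullet> h) \<le> norm (gvec \<psi> y t) * onorm (\<lambda>h::'a. h)"
      using onorm_inner_right[OF bl, of "gvec \<psi> y t"] by simp
    also have "\<dots> \<le> G" using G \<open>y \<in> closed_segment p q\<close> seg by (auto simp: onorm_id)
    finally show "onorm (\<lambda>h. gvec \<psi> y t \<bullet> h) \<le> G" .
  qed auto
  then show ?thesis by simp
qed

lemma integrable_id_compact:
  fixes K :: "'a::euclidean_space set"
  assumes "compact K"
  shows "(\<lambda>x. x) integrable_on K"
proof -
  have i1: "integrable lborel (\<lambda>x. indicator K x *\<^sub>R x)"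
    by (rule borel_integrable_compact[OF assms]) (rule continuous_on_id)
  have m: "(\<lambda>x::'a. indicator K x *\<^sub>R x) \<in> borel_measurable lborel"
    using i1 by (rule borel_measurable_integrable)
  have "integrable lebesgue (\<lambda>x. indicator K x *\<^sub>R x)"
    using i1 integrable_completion[OF m] by simp
  then have "(\<lambda>x. indicator K x *\<^sub>R x) integrable_on UNIV"
    by (rule integrable_on_lebesgue)
  moreover have "(\<lambda>x. indicator K x *\<^sub>R x) = (\<lambda>x. if x \<in> K then x else 0)"
    by (auto simp: indicator_def)
  ultimately show ?thesis using integrable_restrict_UNIV by metis
qed

lemma measure_pos_interior:
  fixes K :: "'a::euclidean_space set"
  assumes "compact K" "interior K \<noteq> {}"
  shows "measure lebesgue K > 0"
proof -
  obtain c where "c \<in> interior K" using assms by blast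
  then obtain r where r: "r > 0" "ball c r \<subseteq> K"
    using open_interior open_contains_ball interior_subset by (metis subset_trans)
  have "measure lebesgue (ball c r) = measure lborel (ball c r)"
    by (intro measure_completion) auto
  also have "\<dots> > 0" using r by (intro content_ball_pos)
  finally have "measure lebesgue (ball c r) > 0" .
  also have "measure lebesgue (ball c r) \<le> measure lebesgue K"
    using r assms by (intro measure_mono_fmeasurable) (auto intro: lmeasurable_compact)
  finally show ?thesis .
qed

lemma mass_center_in:
  fixes K :: "'a::euclidean_space set"
  assumes K: "compact K" "convex K" "interior K \<noteq> {}"
  shows "mass_center K \<in> K"
proof (rule ccontr)
  assume nK: "mass_center K \<notin> K"
  obtain a b where ab: "a \<bullet> mass_center K < b" "\<And>x. x \<in> K \<Longrightarrow> b < a \<bullet> x"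
    using separating_hyperplane_closed_point[OF K(2) compact_imp_closed[OF K(1)] nK] by blast
  have mK: "measure lebesgue K > 0" using measure_pos_interior K by blast
  have lm: "K \<in> lmeasurable" using K by (intro lmeasurable_compact)
  have ii: "(\<lambda>x. x) integrable_on K" by (rule integrable_id_compact[OF K(1)])
  have ia: "(\<lambda>x. a \<bullet> x) integrable_on K"
    using integrable_linear[OF ii bounded_linear_inner_right[of a]] by (simp add: o_def)
  have ic: "(\<lambda>x. b) integrable_on K" using lm by (rule integrable_on_const)
  have "integral K (\<lambda>x. b) \<le> integral K (\<lambda>x. a \<bullet> x)"
    using ab(2) by (intro integral_le[OF ic ia]) (auto intro: less_imp_le)
  moreover have "integral K (\<lambda>x. b) = b * measure lebesgue K"
  proof -
    have "integral K (\<lambda>x. b) = integral K (\<lambda>x. b *\<^sub>R (1::real))" by simp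
    also have "\<dots> = b * integral K (\<lambda>x. 1::real)" by (subst integral_cmul) simp
    finally show ?thesis using lmeasure_integral[OF lm] by simp
  qed
  moreover have "integral K (\<lambda>x. a \<bullet> x) = a \<bullet> integral K (\<lambda>x. x)"
    using integral_component_eq[OF ii, of a] by (simp add: inner_commute)
  moreover have "a \<bullet> integral K (\<lambda>x. x) = (a \<bullet> mass_center K) * measure lebesgue K"
    using mK unfolding mass_center_def by (simp add: inner_scaleR_right)
  ultimately have "b * measure lebesgue K \<le> (a \<bullet> mass_center K) * measure lebesgue K" by simp
  then have "b \<le> a \<bullet> mass_center K" using mK by simp
  then show False using ab(1) by simp
qed

lemma mesh_D:
  fixes \<Omega> :: "'a::euclidean_space set"
  assumes "polytopal_mesh \<Omega> Msh Fc fmeas"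
  shows "bounded \<Omega>" "finite Msh" "Msh \<noteq> {}"
    "\<forall>K\<in>Msh. polytope K \<and> interior K \<noteq> {}"
    "\<Union>Msh = closure \<Omega>"
    "\<forall>K\<in>Msh. finite (Fc K) \<and> \<Union>(Fc K) = frontier K \<and>
        (\<forall>\<sigma>\<in>Fc K. polytope \<sigma> \<and> aff_dim \<sigma> = int DIM('a) - 1 \<and> fmeas \<sigma> > 0) \<and>
        (\<forall>\<sigma>\<in>Fc K. \<forall>\<tau>\<in>Fc K. \<sigma> \<noteq> \<tau> \<longrightarrow> rel_interior \<sigma> \<inter> rel_interior \<tau> = {})"
    "\<forall>\<sigma>. card {K\<in>Msh. \<sigma> \<in> Fc K} \<le> 2"
  using assms unfolding polytopal_mesh_def by simp_all

lemma mesh_cell: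
  assumes mesh: "polytopal_mesh \<Omega> Msh Fc fmeas" and K: "K \<in> Msh"
  shows "compact K" "convex K" "K \<subseteq> closure \<Omega>" "measure lebesgue K > 0"
    "mass_center K \<in> K" "diameter K \<le> mesh_size Msh"
proof -
  have p: "polytope K" "interior K \<noteq> {}" using mesh_D(4)[OF mesh] K by auto
  show c: "compact K" using p polytope_imp_compact by blast
  show cv: "convex K" using p polytope_imp_convex by blast
  show "K \<subseteq> closure \<Omega>" using mesh_D(5)[OF mesh] K by blast
  show "measure lebesgue K > 0" using measure_pos_interior c p by blast
  show "mass_center K \<in> K" using mass_center_in c cv p by blast
  have "finite Msh" using mesh_D(2)[OF mesh] .
  then show "diameter K \<le> mesh_size Msh" unfolding mesh_size_def using K by simp
qed

lemma mesh_face: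
  fixes \<sigma> :: "'a::euclidean_space set"
  assumes mesh: "polytopal_mesh \<Omega> Msh Fc fmeas" and s: "\<sigma> \<in> int_faces Msh Fc"
  defines "A \<equiv> cellA Msh Fc \<sigma>"
  defines "B \<equiv> other_cell Msh Fc A \<sigma>"
  shows "A \<in> Msh" "B \<in> Msh" "A \<noteq> B" "\<sigma> \<in> Fc A" "\<sigma> \<in> Fc B"
    "{K \<in> Msh. \<sigma> \<in> Fc K} = {A, B}" "other_cell Msh Fc B \<sigma> = A"
    "\<sigma> \<noteq> {}" "\<sigma> \<subseteq> A" "\<sigma> \<subseteq> B" "fmeas \<sigma> > 0"
proof -
  obtain K L where KL: "K \<in> Msh" "L \<in> Msh" "K \<noteq> L" "\<sigma> \<in> Fc K" "\<sigma> \<in> Fc L"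
    using s unfolding int_faces_def by blast
  have fin: "finite Msh" and c2: "card {K \<in> Msh. \<sigma> \<in> Fc K} \<le> 2"
    using mesh_D(2,7)[OF mesh] by blast+
  have sub: "{K, L} \<subseteq> {K \<in> Msh. \<sigma> \<in> Fc K}" using KL by auto
  have S: "{K \<in> Msh. \<sigma> \<in> Fc K} = {K, L}"
  proof (rule sym, rule card_subset_eq)
    show "finite {K \<in> Msh. \<sigma> \<in> Fc K}" using fin by simp
    have "card {K, L} = 2" using KL(3) by simp
    moreover have "card {K, L} \<le> card {K \<in> Msh. \<sigma> \<in> Fc K}"
      by (rule card_mono[OF _ sub]) (use fin in simp)
    ultimately show "card {K, L} = card {K \<in> Msh. \<sigma> \<in> Fc K}" using c2 by linarith
  qed (rule sub)
  have ex: "\<exists>K'. K' \<in> Msh \<and> \<sigma> \<in> Fc K'" using KL by blast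
  have "A \<in> Msh \<and> \<sigma> \<in> Fc A" unfolding A_def cellA_def by (rule someI_ex[OF ex])
  then have "A \<in> {K \<in> Msh. \<sigma> \<in> Fc K}" by simp
  then have Ain: "A \<in> {K, L}" using S by simp
  have oc: "\<And>X Y. {X, Y} = {K, L} \<Longrightarrow> X \<noteq> Y \<Longrightarrow> other_cell Msh Fc X \<sigma> = Y"
  proof -
    fix X Y assume XY: "{X, Y} = {K, L}" "X \<noteq> Y"
    have Y1: "Y \<in> {K, L}" using XY(1) by (metis insertCI)
    show "other_cell Msh Fc X \<sigma> = Y" unfolding other_cell_def
    proof (rule the_equality)
      show "Y \<in> Msh \<and> Y \<noteq> X \<and> \<sigma> \<in> Fc Y" using Y1 XY(2) KL by auto
      fix Z assume Z: "Z \<in> Msh \<and> Z \<noteq> X \<and> \<sigma> \<in> Fc Z"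
      then have "Z \<in> {K, L}" using S by blast
      then have "Z \<in> {X, Y}" using XY(1) by simp
      then show "Z = Y" using Z by simp
    qed
  qed
  obtain Y where Y: "{A, Y} = {K, L}" "A \<noteq> Y"
  proof (cases "A = K")
    case True
    then show ?thesis using that[of L] KL by simp
  next
    case False
    then have "A = L" using Ain by simp
    then show ?thesis using that[of K] KL by (simp add: insert_commute)
  qed
  have BY: "B = Y" unfolding B_def by (rule oc[OF Y])
  have AB: "{A, B} = {K, L}" "A \<noteq> B" using Y BY by simp_all
  have AKL: "A \<in> {K, L}" "B \<in> {K, L}" using AB(1) by (metis insertCI)+
  have KLp: "\<And>X. X \<in> {K, L} \<Longrightarrow> X \<in> Msh \<and> \<sigma> \<in> Fc X" using KL by auto
  show "A \<in> Msh" "B \<in> Msh" "A \<noteq> B" "\<sigma> \<in> Fc A" "\<sigma> \<in> Fc B" "{K \<in> Msh. \<sigma> \<in> Fc K} = {A, B}"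
    using KLp[OF AKL(1)] KLp[OF AKL(2)] AB S by simp_all
  show "other_cell Msh Fc B \<sigma> = A" using oc[of B A] AB by (simp add: insert_commute)
  have face: "\<And>X. X \<in> Msh \<Longrightarrow> \<sigma> \<in> Fc X \<Longrightarrow> \<sigma> \<subseteq> X \<and> aff_dim \<sigma> = int DIM('a) - 1 \<and> fmeas \<sigma> > 0"
  proof -
    fix X assume X: "X \<in> Msh" "\<sigma> \<in> Fc X"
    have X6: "\<Union>(Fc X) = frontier X" "\<forall>\<sigma>\<in>Fc X. polytope \<sigma> \<and> aff_dim \<sigma> = int DIM('a) - 1 \<and> fmeas \<sigma> > 0"
      using bspec[OF mesh_D(6)[OF mesh] X(1)] by simp_all
    have X7: "aff_dim \<sigma> = int DIM('a) - 1 \<and> fmeas \<sigma> > 0" using bspec[OF X6(2) X(2)] by simp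
    have "\<sigma> \<subseteq> \<Union>(Fc X)" using X(2) by (rule Union_upper)
    then have "\<sigma> \<subseteq> frontier X" using X6(1) by simp
    also have "frontier X \<subseteq> X" using mesh_cell(1)[OF mesh X(1)]
      by (simp add: compact_imp_closed frontier_subset_closed)
    finally show "\<sigma> \<subseteq> X \<and> aff_dim \<sigma> = int DIM('a) - 1 \<and> fmeas \<sigma> > 0"
      using X7 by simp
  qed
  show "\<sigma> \<subseteq> A" "\<sigma> \<subseteq> B" "fmeas \<sigma> > 0"
    using face[OF \<open>A \<in> Msh\<close> \<open>\<sigma> \<in> Fc A\<close>] face[OF \<open>B \<in> Msh\<close> \<open>\<sigma> \<in> Fc B\<close>] by simp_all
  have "aff_dim \<sigma> \<ge> 0" using face[OF KL(1,4)] DIM_positive[where 'a='a] by linarith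
  then show "\<sigma> \<noteq> {}" by auto
qed

lemma finite_int_faces:
  assumes mesh: "polytopal_mesh \<Omega> Msh Fc fmeas"
  shows "finite (int_faces Msh Fc)"
proof -
  have "int_faces Msh Fc \<subseteq> \<Union> (Fc ` Msh)" unfolding int_faces_def by blast
  moreover have "finite (\<Union> (Fc ` Msh))" using mesh_D(2,6)[OF mesh] by blast
  ultimately show ?thesis by (rule finite_subset)
qed

lemma D_bound:
  fixes M :: real assumes "M > 1"
  shows "(SUP z\<in>{1/M..M}. \<bar>deriv phi_rho z\<bar>) \<ge> 1 + ln M"
proof -
  have bd: "\<bar>deriv phi_rho z\<bar> \<le> 1 + ln M" if "z \<in> {1/M..M}" for z
  proof -
    have z0: "z > 0" using that assms by (auto intro: less_le_trans[of 0 "1/M"])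
    have l1: "ln z \<le> ln M" using that z0 by simp
    have "ln (1/M) \<le> ln z" using that assms z0 by (subst ln_le_cancel_iff) auto
    then have l2: "- ln M \<le> ln z" using assms by (simp add: ln_div)
    have l3: "ln M > 0" using assms by simp
    have "\<bar>ln z + 1\<bar> \<le> 1 + ln M" unfolding abs_le_iff using l1 l2 l3 by linarith
    then show ?thesis using z0 by (simp add: deriv_phi)
  qed
  have "1/M \<le> M" using assms by (smt (verit) divide_le_eq_1 less_imp_le)
  then have "M \<in> {1/M..M}" by auto
  then have "\<bar>deriv phi_rho M\<bar> \<le> (SUP z\<in>{1/M..M}. \<bar>deriv phi_rho z\<bar>)"
    by (intro cSUP_upper bdd_aboveI2[OF bd]) auto
  moreover have "\<bar>deriv phi_rho M\<bar> = 1 + ln M" using assms by (simp add: deriv_phi)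
  ultimately show ?thesis by simp
qed

lemma sum_cells_faces:
  fixes \<Psi> :: "'a::euclidean_space set \<Rightarrow> real"
  assumes mesh: "polytopal_mesh \<Omega> Msh Fc fmeas"
    and pos: "\<And>K. K \<in> Msh \<Longrightarrow> \<rho> K n > 0"
    and anti: "\<And>K L \<sigma>. K \<in> Msh \<Longrightarrow> L \<in> Msh \<Longrightarrow> K \<noteq> L \<Longrightarrow> \<sigma> \<in> Fc K \<Longrightarrow> \<sigma> \<in> Fc L
        \<Longrightarrow> u L \<sigma> n = - u K \<sigma> n"
  shows "(\<Sum>K\<in>Msh. measure lebesgue K * dRm Msh Fc fmeas \<rho> \<rho>s u K n * \<Psi> K) =
    (\<Sum>\<sigma>\<in>int_faces Msh Fc. fmeas \<sigma> * dphi phi_rho (\<rho> (cellA Msh Fc \<sigma>) n)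
        (\<rho> (other_cell Msh Fc (cellA Msh Fc \<sigma>) \<sigma>) n) (\<rho>s \<sigma> n) * u (cellA Msh Fc \<sigma>) \<sigma> n
        * (\<Psi> (cellA Msh Fc \<sigma>) - \<Psi> (other_cell Msh Fc (cellA Msh Fc \<sigma>) \<sigma>)))"
proof -
  define IF where "IF = int_faces Msh Fc"
  define F where "F = (\<lambda>K \<sigma>. fmeas \<sigma> * dphi phi_rho (\<rho> K n) (\<rho> (other_cell Msh Fc K \<sigma>) n) (\<rho>s \<sigma> n)
      * u K \<sigma> n * \<Psi> K)"
  have finM: "finite Msh" using mesh_D(2)[OF mesh] .
  have finIF: "finite IF" unfolding IF_def by (rule finite_int_faces[OF mesh])
  have e1: "measure lebesgue K * dRm Msh Fc fmeas \<rho> \<rho>s u K n * \<Psi> K = (\<Sum>\<sigma>\<in>{\<sigma> \<in> IF. \<sigma> \<in> Fc K}. F K \<sigma>)"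
    if K: "K \<in> Msh" for K
  proof -
    have m: "measure lebesgue K > 0" using mesh_cell(4)[OF mesh K] .
    have st: "Fc K \<inter> int_faces Msh Fc = {\<sigma> \<in> IF. \<sigma> \<in> Fc K}" unfolding IF_def by blast
    show ?thesis using m unfolding dRm_def st F_def by (simp add: sum_distrib_right)
  qed
  have "(\<Sum>K\<in>Msh. measure lebesgue K * dRm Msh Fc fmeas \<rho> \<rho>s u K n * \<Psi> K) =
      (\<Sum>K\<in>Msh. \<Sum>\<sigma>\<in>{\<sigma> \<in> IF. \<sigma> \<in> Fc K}. F K \<sigma>)" using e1 by (rule sum.cong[OF refl])
  also have "\<dots> = (\<Sum>\<sigma>\<in>IF. \<Sum>K | K \<in> Msh \<and> \<sigma> \<in> Fc K. F K \<sigma>)"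
    by (rule sum.swap_restrict[OF finM finIF])
  also have "\<dots> = (\<Sum>\<sigma>\<in>IF. fmeas \<sigma> * dphi phi_rho (\<rho> (cellA Msh Fc \<sigma>) n)
        (\<rho> (other_cell Msh Fc (cellA Msh Fc \<sigma>) \<sigma>) n) (\<rho>s \<sigma> n) * u (cellA Msh Fc \<sigma>) \<sigma> n
        * (\<Psi> (cellA Msh Fc \<sigma>) - \<Psi> (other_cell Msh Fc (cellA Msh Fc \<sigma>) \<sigma>)))"
  proof (rule sum.cong[OF refl])
    fix \<sigma> assume s: "\<sigma> \<in> IF"
    let ?A = "cellA Msh Fc \<sigma>"
    let ?B = "other_cell Msh Fc ?A \<sigma>"
    note f = mesh_face[OF mesh s[unfolded IF_def]]
    have set: "{K. K \<in> Msh \<and> \<sigma> \<in> Fc K} = {?A, ?B}" using f(6) by simp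
    have "(\<Sum>K | K \<in> Msh \<and> \<sigma> \<in> Fc K. F K \<sigma>) = F ?A \<sigma> + F ?B \<sigma>"
      unfolding set using f(3) by simp
    also have "\<dots> = fmeas \<sigma> * dphi phi_rho (\<rho> ?A n) (\<rho> ?B n) (\<rho>s \<sigma> n) * u ?A \<sigma> n * (\<Psi> ?A - \<Psi> ?B)"
    proof -
      have "dphi phi_rho (\<rho> ?B n) (\<rho> ?A n) (\<rho>s \<sigma> n) = dphi phi_rho (\<rho> ?A n) (\<rho> ?B n) (\<rho>s \<sigma> n)"
        using dphi_sym pos f(1,2) by metis
      moreover have "u ?B \<sigma> n = - u ?A \<sigma> n" using anti f(1-5) by blast
      ultimately show ?thesis unfolding F_def f(7) by (simp add: algebra_simps)
    qed
    finally show "(\<Sum>K | K \<in> Msh \<and> \<sigma> \<in> Fc K. F K \<sigma>) = fmeas \<sigma> * dphi phi_rho (\<rho> ?A n) (\<rho> ?B n) (\<rho>s \<sigma> n) * u ?A \<sigma> n * (\<Psi> ?A - \<Psi> ?B)" .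
  qed
  finally show ?thesis unfolding IF_def .
qed

theorem lemma2p7:
  fixes \<Omega> :: "'a::euclidean_space set"
    and Msh :: "'a set set" and Fc :: "'a set \<Rightarrow> 'a set set" and fmeas :: "'a set \<Rightarrow> real"
    and T M :: real and N :: nat
    and \<rho> :: "'a set \<Rightarrow> nat \<Rightarrow> real" and \<rho>s :: "'a set \<Rightarrow> nat \<Rightarrow> real"
    and u :: "'a set \<Rightarrow> 'a set \<Rightarrow> nat \<Rightarrow> real"
  assumes mesh: "polytopal_mesh \<Omega> Msh Fc fmeas"
    and T: "T > 0" and N: "N \<ge> 1"
    and u_antisym: "\<And>K L \<sigma> n. K \<in> Msh \<Longrightarrow> L \<in> Msh \<Longrightarrow> K \<noteq> L \<Longrightarrow> \<sigma> \<in> Fc K \<Longrightarrow> \<sigma> \<in> Fc L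
        \<Longrightarrow> n \<le> N \<Longrightarrow> u L \<sigma> n = - u K \<sigma> n"
    and u_bdry: "\<And>K \<sigma> n. K \<in> Msh \<Longrightarrow> \<sigma> \<in> Fc K \<Longrightarrow> \<sigma> \<notin> int_faces Msh Fc \<Longrightarrow> n \<le> N
        \<Longrightarrow> u K \<sigma> n = 0"
    and rho_pos: "\<And>K n. K \<in> Msh \<Longrightarrow> n \<le> N \<Longrightarrow> \<rho> K n > 0"
    and face_val: "\<And>K L \<sigma> n. K \<in> Msh \<Longrightarrow> L \<in> Msh \<Longrightarrow> K \<noteq> L \<Longrightarrow> \<sigma> \<in> Fc K \<Longrightarrow> \<sigma> \<in> Fc L
        \<Longrightarrow> n < N \<Longrightarrow>
        (if u K \<sigma> (n+1) \<ge> 0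
         then \<rho>s \<sigma> (n+1) \<in> bracket_int (\<rho> K (n+1)) (xKL phi_rho (\<rho> K (n+1)) (\<rho> L (n+1)))
         else \<rho>s \<sigma> (n+1) \<in> bracket_int (\<rho> L (n+1)) (xKL phi_rho (\<rho> K (n+1)) (\<rho> L (n+1))))"
    and M: "M > 1"
    and rho_le: "\<And>K n. K \<in> Msh \<Longrightarrow> n \<le> N \<Longrightarrow> \<rho> K n \<le> M"
    and rho_inv_le: "\<And>K n. K \<in> Msh \<Longrightarrow> n \<le> N \<Longrightarrow> 1 / \<rho> K n \<le> M"
    and u_le: "\<And>K \<sigma> n. K \<in> Msh \<Longrightarrow> \<sigma> \<in> Fc K \<Longrightarrow> n \<le> N \<Longrightarrow> \<bar>u K \<sigma> n\<bar> \<le> M"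
  shows "norm_m11 \<Omega> Msh T N {1..N} (dRm Msh Fc fmeas \<rho> \<rho>s u)
    \<le> ereal (3 * M * (SUP z\<in>{1/M..M}. \<bar>deriv phi_rho z\<bar>)
             * norm_BV Msh Fc fmeas T N {0..N} \<rho> * mesh_size Msh)"
proof -
  define IF where "IF = int_faces Msh Fc"
  define A where "A = (\<lambda>\<sigma>. cellA Msh Fc \<sigma>)"
  define B where "B = (\<lambda>\<sigma>. other_cell Msh Fc (A \<sigma>) \<sigma>)"
  define D where "D = (SUP z\<in>{1/M..M}. \<bar>deriv phi_rho z\<bar>)"
  define h where "h = mesh_size Msh"
  define dt where "dt = T / real N"
  define BV where "BV = norm_BV Msh Fc fmeas T N {0..N} \<rho>"
  have bdO: "bounded \<Omega>" using mesh_D(1)[OF mesh] .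
  have finIF: "finite IF" unfolding IF_def by (rule finite_int_faces[OF mesh])
  obtain K0 where K0: "K0 \<in> Msh" using mesh_D(3)[OF mesh] by blast
  have "interior K0 \<noteq> {}" using mesh_D(4)[OF mesh] K0 by blast
  then have "K0 \<noteq> {}" by auto
  then have "closure \<Omega> \<noteq> {}" using mesh_cell(3)[OF mesh K0] by (metis subset_empty)
  then have One: "\<Omega> \<noteq> {}" by auto
  have lnM: "ln M > 0" using M by simp
  have DL: "D \<ge> 1 + ln M" unfolding D_def by (rule D_bound[OF M])
  have D0: "D \<ge> 0" using DL lnM by simp
  have h0: "h \<ge> 0"
  proof -
    have "bounded K0" using mesh_cell(1)[OF mesh K0] by (rule compact_imp_bounded)
    then have "0 \<le> diameter K0" by (rule diameter_ge_0)
    also have "\<dots> \<le> h" unfolding h_def by (rule mesh_cell(6)[OF mesh K0])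
    finally show ?thesis .
  qed
  have dt0: "dt > 0" unfolding dt_def using T N by simp
  have M0: "M \<ge> 0" using M by simp
  have BVge: "(\<Sum>n\<in>{1..N}. dt * (\<Sum>\<sigma>\<in>IF. fmeas \<sigma> * \<bar>\<rho> (B \<sigma>) n - \<rho> (A \<sigma>) n\<bar>)) \<le> BV"
  proof -
    have "(\<Sum>n\<in>{1..N}. dt * (\<Sum>\<sigma>\<in>IF. fmeas \<sigma> * \<bar>\<rho> (B \<sigma>) n - \<rho> (A \<sigma>) n\<bar>))
       \<le> (\<Sum>n\<in>{0..N}. dt * (\<Sum>\<sigma>\<in>IF. fmeas \<sigma> * \<bar>\<rho> (B \<sigma>) n - \<rho> (A \<sigma>) n\<bar>))"
    proof (rule sum_mono2)
      show "finite {0..N}" by simp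
      show "{1..N} \<subseteq> {0..N}" by auto
      fix n assume "n \<in> {0..N} - {1..N}"
      have nn: "\<And>\<sigma>. \<sigma> \<in> IF \<Longrightarrow> 0 \<le> fmeas \<sigma> * \<bar>\<rho> (B \<sigma>) n - \<rho> (A \<sigma>) n\<bar>"
        using mesh_face(11)[OF mesh] unfolding IF_def by (simp add: less_imp_le)
      show "0 \<le> dt * (\<Sum>\<sigma>\<in>IF. fmeas \<sigma> * \<bar>\<rho> (B \<sigma>) n - \<rho> (A \<sigma>) n\<bar>)"
        using dt0 sum_nonneg[of IF, OF nn] by simp
    qed
    also have "\<dots> = BV" unfolding BV_def norm_BV_def dt_def IF_def A_def B_def by simp
    finally show ?thesis .
  qed
  have BV0: "BV \<ge> 0"
  proof -
    have "0 \<le> (\<Sum>n\<in>{1..N}. dt * (\<Sum>\<sigma>\<in>IF. fmeas \<sigma> * \<bar>\<rho> (B \<sigma>) n - \<rho> (A \<sigma>) n\<bar>))"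
      using mesh_face(11)[OF mesh] dt0 unfolding IF_def
      by (intro sum_nonneg mult_nonneg_nonneg) (auto simp: less_imp_le)
    then show ?thesis using BVge by linarith
  qed
  show ?thesis
    unfolding norm_m11_def
  proof (rule SUP_least)
    fix \<psi> assume "\<psi> \<in> {\<psi>. test_fun \<Omega> T \<psi> \<and> grad_sup \<Omega> T \<psi> \<noteq> 0}"
    then have tf: "test_fun \<Omega> T \<psi>" and Gne: "grad_sup \<Omega> T \<psi> \<noteq> 0" by auto
    have sm: "smooth_fun \<psi>" using tf unfolding test_fun_def by blast
    obtain t0 where t0: "t0 < T" "\<And>x t. x \<in> closure \<Omega> \<Longrightarrow> t \<in> {t0..T} \<Longrightarrow> \<psi> (x, t) = 0"
      using tf unfolding test_fun_def by blast
    define G where "G = grad_sup \<Omega> T \<psi>"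
    have G0: "G > 0" using grad_sup_bound(2)[OF sm bdO T One] Gne unfolding G_def by simp
    have Gb: "\<And>x t. x \<in> closure \<Omega> \<Longrightarrow> t \<in> {0<..<T} \<Longrightarrow> norm (gvec \<psi> x t) \<le> G"
      unfolding G_def by (rule grad_sup_bound(1)[OF sm bdO T])
    define trm where "trm = (\<lambda>\<sigma> n. fmeas \<sigma> * dphi phi_rho (\<rho> (A \<sigma>) n) (\<rho> (B \<sigma>) n) (\<rho>s \<sigma> n)
        * u (A \<sigma>) \<sigma> n * (\<psi> (mass_center (A \<sigma>), real n * dt) - \<psi> (mass_center (B \<sigma>), real n * dt)))"
    define C where "C = 3 * M * D * G * h"
    have inner: "(\<Sum>K\<in>Msh. measure lebesgue K * dRm Msh Fc fmeas \<rho> \<rho>s u K n * \<psi> (mass_center K, real n * (T / real N)))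
        = (\<Sum>\<sigma>\<in>IF. trm \<sigma> n)" if n: "n \<in> {1..N}" for n
    proof -
      have p1: "\<And>K. K \<in> Msh \<Longrightarrow> \<rho> K n > 0" using rho_pos n by simp
      have p2: "\<And>K L \<sigma>. K \<in> Msh \<Longrightarrow> L \<in> Msh \<Longrightarrow> K \<noteq> L \<Longrightarrow> \<sigma> \<in> Fc K \<Longrightarrow> \<sigma> \<in> Fc L
          \<Longrightarrow> u L \<sigma> n = - u K \<sigma> n"
      proof -
        fix K L \<sigma> assume "K \<in> Msh" "L \<in> Msh" "K \<noteq> L" "\<sigma> \<in> Fc K" "\<sigma> \<in> Fc L"
        moreover have "n \<le> N" using n by simp
        ultimately show "u L \<sigma> n = - u K \<sigma> n" by (rule u_antisym)
      qed
      note e = sum_cells_faces[where \<Psi> = "\<lambda>K. \<psi> (mass_center K, real n * (T / real N))" and \<rho>=\<rho> and n=n and u=u and \<rho>s=\<rho>s, OF mesh p1 p2]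
      show ?thesis unfolding trm_def IF_def A_def B_def dt_def by (rule e)
    qed
    have tb: "\<bar>trm \<sigma> n\<bar> \<le> C * (fmeas \<sigma> * \<bar>\<rho> (B \<sigma>) n - \<rho> (A \<sigma>) n\<bar>)"
      if n: "n \<in> {1..N}" and s: "\<sigma> \<in> IF" for n \<sigma>
    proof -
      have As: "cellA Msh Fc \<sigma> = A \<sigma>" unfolding A_def by simp
      have Bs: "other_cell Msh Fc (A \<sigma>) \<sigma> = B \<sigma>" unfolding B_def by simp
      note f = mesh_face[OF mesh s[unfolded IF_def], unfolded As Bs]
      have nN: "n \<le> N" using n by simp
      define a where "a = \<rho> (A \<sigma>) n"
      define b where "b = \<rho> (B \<sigma>) n"
      define sv where "sv = \<rho>s \<sigma> n"
      have ab: "a > 0" "b > 0" "a \<le> M" "b \<le> M" "1/a \<le> M" "1/b \<le> M"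
        unfolding a_def b_def using rho_pos[OF f(1) nN] rho_pos[OF f(2) nN] rho_le[OF f(1) nN]
          rho_le[OF f(2) nN] rho_inv_le[OF f(1) nN] rho_inv_le[OF f(2) nN] by simp_all
      have fv: "if u (A \<sigma>) \<sigma> n \<ge> 0
         then sv \<in> bracket_int a (xKL phi_rho a b)
         else sv \<in> bracket_int b (xKL phi_rho a b)"
      proof -
        have l: "n - 1 < N" and e: "n - 1 + 1 = n" using n by auto
        show ?thesis using face_val[OF f(1,2,3,4,5) l, unfolded e]
          unfolding a_def b_def sv_def .
      qed
      have dpb: "\<bar>dphi phi_rho a b sv\<bar> \<le> 3/2 * D * \<bar>a - b\<bar>"
      proof -
        have "\<bar>dphi phi_rho a b sv\<bar> \<le> 3/2 * (1 + ln M) * \<bar>a - b\<bar>"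
        proof (cases "u (A \<sigma>) \<sigma> n \<ge> 0")
          case True
          then have "sv \<in> bracket_int a (xKL phi_rho a b)" using fv by simp
          then show ?thesis using dphi_bound[OF ab M] by simp
        next
          case False
          then have "sv \<in> bracket_int b (xKL phi_rho b a)" using fv xKL_sym[OF ab(1,2)] by simp
          then have "\<bar>dphi phi_rho b a sv\<bar> \<le> 3/2 * (1 + ln M) * \<bar>b - a\<bar>"
            using dphi_bound[OF ab(2,1,4,3,6,5) M] by simp
          then show ?thesis using dphi_sym[OF ab(1,2)] by (simp add: abs_minus_commute)
        qed
        also have "\<dots> \<le> 3/2 * D * \<bar>a - b\<bar>" using DL by (intro mult_right_mono) auto
        finally show ?thesis .
      qed
      have ub: "\<bar>u (A \<sigma>) \<sigma> n\<bar> \<le> M" using u_le[OF f(1,4) nN] .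
      have dfb: "\<bar>\<psi> (mass_center (A \<sigma>), real n * dt) - \<psi> (mass_center (B \<sigma>), real n * dt)\<bar> \<le> 2 * G * h"
      proof (cases "n = N")
        case True
        then have tT: "real n * dt = T" unfolding dt_def using N by simp
        have "mass_center (A \<sigma>) \<in> closure \<Omega>" "mass_center (B \<sigma>) \<in> closure \<Omega>"
          using mesh_cell(3,5)[OF mesh f(1)] mesh_cell(3,5)[OF mesh f(2)] by auto
        then have "\<psi> (mass_center (A \<sigma>), real n * dt) = 0" "\<psi> (mass_center (B \<sigma>), real n * dt) = 0"
          using t0(2) t0(1) unfolding tT by simp_all
        then show ?thesis using G0 h0 by simp
      next
        case False
        define t where "t = real n * dt"
        have tin: "t \<in> {0<..<T}"
        proof -
          have "n < N" "1 \<le> n" using False n by auto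
          then have "real n < real N" "real n > 0" by auto
          then show ?thesis unfolding t_def dt_def using T N by (auto simp: field_simps)
        qed
        obtain y where y: "y \<in> \<sigma>" using f(8) by blast
        have side: "\<bar>\<psi> (mass_center X, t) - \<psi> (y, t)\<bar> \<le> G * h" if X: "X \<in> Msh" "\<sigma> \<subseteq> X" for X
        proof -
          have yX: "y \<in> X" using y X by blast
          have mX: "mass_center X \<in> X" by (rule mesh_cell(5)[OF mesh X(1)])
          have seg: "closed_segment (mass_center X) y \<subseteq> closure \<Omega>"
            using closed_segment_subset[OF mX yX mesh_cell(2)[OF mesh X(1)]] mesh_cell(3)[OF mesh X(1)] by blast
          have "\<bar>\<psi> (mass_center X, t) - \<psi> (y, t)\<bar> \<le> G * norm (mass_center X - y)"
            by (rule lipschitz_segment[OF sm seg]) (use Gb tin in blast)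
          also have "norm (mass_center X - y) \<le> h"
          proof -
            have "norm (mass_center X - y) = dist (mass_center X) y" by (simp add: dist_norm)
            also have "\<dots> \<le> diameter X"
              by (rule diameter_bounded_bound[OF compact_imp_bounded[OF mesh_cell(1)[OF mesh X(1)]] mX yX])
            also have "\<dots> \<le> h" unfolding h_def by (rule mesh_cell(6)[OF mesh X(1)])
            finally show ?thesis .
          qed
          then have "G * norm (mass_center X - y) \<le> G * h" using G0 by (intro mult_left_mono) auto
          finally show ?thesis .
        qed
        have "\<bar>\<psi> (mass_center (A \<sigma>), t) - \<psi> (mass_center (B \<sigma>), t)\<bar>
           \<le> \<bar>\<psi> (mass_center (A \<sigma>), t) - \<psi> (y, t)\<bar> + \<bar>\<psi> (mass_center (B \<sigma>), t) - \<psi> (y, t)\<bar>" by linarith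
        also have "\<dots> \<le> G * h + G * h" using side[OF f(1,9)] side[OF f(2,10)] by linarith
        finally show ?thesis unfolding t_def by simp
      qed
      have fm: "fmeas \<sigma> \<ge> 0" using f(11) by simp
      let ?df = "\<psi> (mass_center (A \<sigma>), real n * dt) - \<psi> (mass_center (B \<sigma>), real n * dt)"
      have "\<bar>trm \<sigma> n\<bar> = fmeas \<sigma> * \<bar>dphi phi_rho a b sv\<bar> * \<bar>u (A \<sigma>) \<sigma> n\<bar> * \<bar>?df\<bar>"
        unfolding trm_def a_def b_def sv_def using fm by (simp add: abs_mult)
      also have "\<dots> \<le> fmeas \<sigma> * (3/2 * D * \<bar>a - b\<bar>) * M * (2 * G * h)"
      proof -
        have s1: "fmeas \<sigma> * \<bar>dphi phi_rho a b sv\<bar> \<le> fmeas \<sigma> * (3/2 * D * \<bar>a - b\<bar>)"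
          using dpb fm by (rule mult_left_mono)
        have s2: "fmeas \<sigma> * \<bar>dphi phi_rho a b sv\<bar> * \<bar>u (A \<sigma>) \<sigma> n\<bar> \<le> fmeas \<sigma> * (3/2 * D * \<bar>a - b\<bar>) * M"
          by (rule mult_mono[OF s1 ub]) (use fm D0 in auto)
        show ?thesis
          by (rule mult_mono[OF s2 dfb]) (use fm D0 M0 in auto)
      qed
      also have "\<dots> = C * (fmeas \<sigma> * \<bar>\<rho> (B \<sigma>) n - \<rho> (A \<sigma>) n\<bar>)"
        unfolding C_def a_def b_def by (simp add: abs_minus_commute algebra_simps)
      finally show ?thesis .
    qed
    define val where "val = (\<Sum>n\<in>{1..N}. T / real N * (\<Sum>K\<in>Msh. measure lebesgue K * dRm Msh Fc fmeas \<rho> \<rho>s u K n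
          * \<psi> (mass_center K, real n * (T / real N))))"
    have "val = (\<Sum>n\<in>{1..N}. dt * (\<Sum>\<sigma>\<in>IF. trm \<sigma> n))"
      unfolding val_def
    proof (rule sum.cong[OF refl])
      fix n assume n: "n \<in> {1..N}"
      show "T / real N * (\<Sum>K\<in>Msh. measure lebesgue K * dRm Msh Fc fmeas \<rho> \<rho>s u K n
          * \<psi> (mass_center K, real n * (T / real N))) = dt * (\<Sum>\<sigma>\<in>IF. trm \<sigma> n)"
        unfolding inner[OF n] dt_def ..
    qed
    then have "\<bar>val\<bar> \<le> (\<Sum>n\<in>{1..N}. \<bar>dt * (\<Sum>\<sigma>\<in>IF. trm \<sigma> n)\<bar>)" by (simp add: sum_abs)
    also have "\<dots> \<le> (\<Sum>n\<in>{1..N}. dt * (\<Sum>\<sigma>\<in>IF. C * (fmeas \<sigma> * \<bar>\<rho> (B \<sigma>) n - \<rho> (A \<sigma>) n\<bar>)))"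
    proof (rule sum_mono)
      fix n assume n: "n \<in> {1..N}"
      have "\<bar>dt * (\<Sum>\<sigma>\<in>IF. trm \<sigma> n)\<bar> = dt * \<bar>\<Sum>\<sigma>\<in>IF. trm \<sigma> n\<bar>" using dt0 by (simp add: abs_mult)
      also have "\<dots> \<le> dt * (\<Sum>\<sigma>\<in>IF. \<bar>trm \<sigma> n\<bar>)" using dt0 by (intro mult_left_mono sum_abs) auto
      also have "\<dots> \<le> dt * (\<Sum>\<sigma>\<in>IF. C * (fmeas \<sigma> * \<bar>\<rho> (B \<sigma>) n - \<rho> (A \<sigma>) n\<bar>))"
        using dt0 tb[OF n] by (intro mult_left_mono sum_mono) auto
      finally show "\<bar>dt * (\<Sum>\<sigma>\<in>IF. trm \<sigma> n)\<bar> \<le> dt * (\<Sum>\<sigma>\<in>IF. C * (fmeas \<sigma> * \<bar>\<rho> (B \<sigma>) n - \<rho> (A \<sigma>) n\<bar>))" .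
    qed
    also have "\<dots> = C * (\<Sum>n\<in>{1..N}. dt * (\<Sum>\<sigma>\<in>IF. fmeas \<sigma> * \<bar>\<rho> (B \<sigma>) n - \<rho> (A \<sigma>) n\<bar>))"
      by (simp add: sum_distrib_left algebra_simps)
    also have "\<dots> \<le> C * BV"
      using BVge G0 D0 h0 M0 unfolding C_def by (intro mult_left_mono) auto
    finally have vb: "\<bar>val\<bar> \<le> C * BV" .
    have "val / G \<le> \<bar>val\<bar> / G" using G0 by (intro divide_right_mono) auto
    also have "\<dots> \<le> C * BV / G" using vb G0 by (intro divide_right_mono) auto
    also have "\<dots> = 3 * M * D * BV * h" unfolding C_def using G0 by (simp add: field_simps)
    finally have "val / G \<le> 3 * M * D * BV * h" .
    then show "ereal (val / G) \<le> ereal (3 * M * (SUP z\<in>{1/M..M}. \<bar>deriv phi_rho z\<bar>)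
             * norm_BV Msh Fc fmeas T N {0..N} \<rho> * mesh_size Msh)"
      unfolding D_def BV_def h_def by simp
  qed
qed

end
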